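(* Consider a Huffman-type combining procedure implemented with the two-queue method: there is a first queue of single (leaf) items and a second queue of compound items; each step removes two nodes, makes them the two children of a new compound node, and appends that new node to the tail of the second queue, until a single node (the root of the final tree) remains; in particular, once the first queue is empty, each step removes the two nodes at the head of the second queue. Suppose that at some step the first queue is empty and $n\ge 1$ compound items remain (all in the second queue). Then, in the final tree, the nodes corresponding to these $n$ compound items lie on levels (depths from the root) differing by at most one, i.e., they are the leaves of a complete binary tree; furthermore, every one of these items that ends up at level $\lceil \log_2 n\rceil$ is closer to the head of the second queue than every one of these items that ends up at level $\lceil \log_2 n\rceil-1$ (if any). *)

theory Defs
  imports Complex_Main
begin

datatype 'a btree = Leaf 'a | Node "'a btree" "'a btree"

fun queue_step :: "'a btree list \<Rightarrow> 'a btree list" where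
  "queue_step (a # b # rest) = rest @ [Node a b]"
| "queue_step q = q"

text \<open>Run the procedure until a single node (the root) remains; each step
  shortens the queue by one, so this takes length q - 1 steps.\<close>
definition final_tree :: "'a btree list \<Rightarrow> 'a btree" where
  "final_tree q = hd ((queue_step ^^ (length q - 1)) q)"

fun leaf_depths :: "'a btree \<Rightarrow> ('a \<times> nat) set" where
  "leaf_depths (Leaf x) = {(x, 0)}"
| "leaf_depths (Node l r) = {(x, Suc d) | x d. (x, d) \<in> leaf_depths l \<union> leaf_depths r}"

end

theory Submission
  imports Defs
begin

function heap :: "'a list \<Rightarrow> nat \<Rightarrow> 'a btree" where
  "heap xs u = (if u = 0 \<or> length xs \<le> u then Leaf (xs ! (2 * length xs - 1 - u))
                else Node (heap xs (2*u+1)) (heap xs (2*u)))"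
  by pat_completeness auto
termination by (relation "measure (\<lambda>(xs,u). length xs - u)") auto

declare heap.simps[simp del]

lemma dv: "((v::nat) div 2^Suc d = u) \<longleftrightarrow> (v div 2^d = 2*u+1 \<or> v div 2^d = 2*u)"
proof -
  have "v div 2^Suc d = v div 2^d div 2" by (metis div_mult2_eq power_Suc2)
  then show ?thesis by linarith
qed

lemma two_le_pow: "d \<noteq> 0 \<Longrightarrow> 2 ^ d \<ge> (2::nat)"
  by (metis one_le_numeral power_increasing power_one_right Suc_leI neq0_conv Suc_eq_plus1 add_0)

lemma heap_ld:
  assumes "1 \<le> u" "u \<le> 2 * length xs - 1"
  shows "(x, d) \<in> leaf_depths (heap xs u) \<longleftrightarrow>
     (\<exists>v. length xs \<le> v \<and> v \<le> 2 * length xs - 1 \<and> v div 2^d = u \<and> x = xs ! (2 * length xs - 1 - v))"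
  using assms
proof (induction xs u arbitrary: x d rule: heap.induct)
  case (1 xs u)
  let ?n = "length xs"
  show ?case
  proof (cases "?n \<le> u")
    case True
    then have h: "heap xs u = Leaf (xs ! (2 * ?n - 1 - u))" by (simp add: heap.simps)
    show ?thesis
    proof
      assume "(x, d) \<in> leaf_depths (heap xs u)"
      then show "\<exists>v. ?n \<le> v \<and> v \<le> 2 * ?n - 1 \<and> v div 2^d = u \<and> x = xs ! (2 * ?n - 1 - v)"
        using h True 1(3,4) by (intro exI[of _ u]) auto
    next
      assume "\<exists>v. ?n \<le> v \<and> v \<le> 2 * ?n - 1 \<and> v div 2^d = u \<and> x = xs ! (2 * ?n - 1 - v)"
      then obtain v where v: "?n \<le> v" "v \<le> 2 * ?n - 1" "v div 2^d = u" "x = xs ! (2 * ?n - 1 - v)" by blast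
      have "d = 0"
      proof (rule ccontr)
        assume "d \<noteq> 0"
        then have "2 ^ d \<ge> (2::nat)" by (rule two_le_pow)
        have "2^d * u \<le> v" using v(3) by (metis div_times_less_eq_dividend mult.commute)
        then have "2 * u \<le> v" using \<open>2^d \<ge> 2\<close> by (meson le_trans mult_le_mono1)
        then show False using v(2) True 1(3) by arith
      qed
      then show "(x, d) \<in> leaf_depths (heap xs u)" using v h by simp
    qed
  next
    case False
    then have h: "heap xs u = Node (heap xs (2*u+1)) (heap xs (2*u))" using 1(3,4) by (simp add: heap.simps)
    have IH1: "\<And>x d. (x, d) \<in> leaf_depths (heap xs (2*u+1)) \<longleftrightarrow>
     (\<exists>v. ?n \<le> v \<and> v \<le> 2 * ?n - 1 \<and> v div 2^d = 2*u+1 \<and> x = xs ! (2 * ?n - 1 - v))"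
      using 1(1) False 1(3,4) by auto
    have IH2: "\<And>x d. (x, d) \<in> leaf_depths (heap xs (2*u)) \<longleftrightarrow>
     (\<exists>v. ?n \<le> v \<and> v \<le> 2 * ?n - 1 \<and> v div 2^d = 2*u \<and> x = xs ! (2 * ?n - 1 - v))"
      using 1(2) False 1(3,4) by auto
    show ?thesis
    proof (cases d)
      case 0
      then show ?thesis using h False by auto
    next
      case (Suc d')
      show ?thesis unfolding h Suc using IH1 IH2 dv by auto
    qed
  qed
qed

lemma inv:
  assumes "length xs = n" "n \<ge> 1"
  shows "s \<le> n - 1 \<Longrightarrow> (queue_step ^^ s) (map Leaf xs) = map (\<lambda>m. heap xs (2*n-1-m)) [2*s..<n+s]"
proof (induction s)
  case 0
  show ?case
  proof (rule nth_equalityI)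
    fix i assume "i < length ((queue_step ^^ 0) (map Leaf xs))"
    then have "i < n" using assms by simp
    then show "(queue_step ^^ 0) (map Leaf xs) ! i = map (\<lambda>m. heap xs (2*n-1-m)) [2*0..<n+0] ! i"
      using assms by (simp add: heap.simps)
  qed (use assms in simp)
next
  case (Suc s)
  then have IH: "(queue_step ^^ s) (map Leaf xs) = map (\<lambda>m. heap xs (2*n-1-m)) [2*s..<n+s]" by simp
  have l: "[2*s..<n+s] = 2*s # (2*s+1) # [2*s+2..<n+s]" using Suc.prems by (simp add: upt_rec)
  have r: "[2*Suc s..<n+Suc s] = [2*s+2..<n+s] @ [n+s]" using Suc.prems by simp
  have u: "heap xs (2*n-1-(n+s)) = Node (heap xs (2*n-1-2*s)) (heap xs (2*n-1-(2*s+1)))"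
  proof -
    define w where "w = n - 1 - s"
    have hw: "heap xs w = Node (heap xs (2*w+1)) (heap xs (2*w))"
      by (subst heap.simps) (use Suc.prems assms in \<open>simp add: w_def; arith\<close>)
    have e1: "2*n-1-(n+s) = w" "2*w+1 = 2*n-1-2*s" "2*w = 2*n-1-(2*s+1)" using Suc.prems unfolding w_def by arith+
    show ?thesis using hw e1 by metis
  qed
  have "(queue_step ^^ Suc s) (map Leaf xs) = queue_step (map (\<lambda>m. heap xs (2*n-1-m)) [2*s..<n+s])"
    using IH by simp
  also have "\<dots> = map (\<lambda>m. heap xs (2*n-1-m)) [2*s+2..<n+s] @ [Node (heap xs (2*n-1-2*s)) (heap xs (2*n-1-(2*s+1)))]"
    unfolding l by simp
  also have "\<dots> = map (\<lambda>m. heap xs (2*n-1-m)) [2*s+2..<n+s] @ [heap xs (2*n-1-(n+s))]"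
    unfolding u ..
  also have "\<dots> = map (\<lambda>m. heap xs (2*n-1-m)) [2*Suc s..<n+Suc s]"
    unfolding r by simp
  finally show ?case .
qed

lemma final_heap:
  assumes "length xs = n" "n \<ge> 1"
  shows "final_tree (map Leaf xs) = heap xs 1"
proof -
  have "(queue_step ^^ (n-1)) (map Leaf xs) = map (\<lambda>m. heap xs (2*n-1-m)) [2*(n-1)..<n+(n-1)]"
    using inv[OF assms] by simp
  moreover have "[2*(n-1)..<n+(n-1)] = [2*n-2]"
  proof -
    have "2*(n-1) = 2*n-2" "n+(n-1) = Suc (2*n-2)" using assms(2) by arith+
    then show ?thesis by simp
  qed
  moreover have "2*n-1-(2*n-2) = 1" using assms(2) by arith
  ultimately show ?thesis unfolding final_tree_def using assms by simp
qed


lemma div_one_iff: "(v::nat) div 2^d = 1 \<longleftrightarrow> 2^d \<le> v \<and> v < 2*2^d"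
proof -
  have "v div 2^d = 1 \<longleftrightarrow> 1 \<le> v div 2^d \<and> v div 2^d < 2" by auto
  also have "\<dots> \<longleftrightarrow> 2^d \<le> v \<and> v < 2*2^d"
    by (simp add: div_less_iff_less_mult le_div_geq Suc_le_eq div_greater_zero_iff mult.commute)
  finally show ?thesis .
qed

lemma klog:
  assumes "n \<ge> (1::nat)"
  shows "n \<le> 2 ^ nat \<lceil>log 2 (real n)\<rceil> \<and> (nat \<lceil>log 2 (real n)\<rceil> = 0 \<or> 2 ^ (nat \<lceil>log 2 (real n)\<rceil> - 1) < n)"
proof (cases "n = 1")
  case True then show ?thesis by simp
next
  case False
  then have "n \<ge> 2" using assms by simp
  then obtain i where i: "2^i < n" "n \<le> 2^(i+1)" using ex_power_ivl2[of 2 n] by auto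
  have "\<lceil>log (real 2) (real n)\<rceil> = int i + 1" by (rule ceiling_log_nat_eq_if[OF i]) simp
  then have "nat \<lceil>log 2 (real n)\<rceil> = i + 1" by simp
  then show ?thesis using i by simp
qed

lemma char:
  assumes "distinct xs" "length xs = n" "n \<ge> 1" "i < n"
  shows "(xs ! i, d) \<in> leaf_depths (final_tree (map Leaf xs)) \<longleftrightarrow> (2*n-1-i) div 2^d = 1"
proof -
  have "(xs ! i, d) \<in> leaf_depths (final_tree (map Leaf xs)) \<longleftrightarrow>
     (\<exists>v. n \<le> v \<and> v \<le> 2 * n - 1 \<and> v div 2^d = 1 \<and> xs ! i = xs ! (2 * n - 1 - v))"
    unfolding final_heap[OF assms(2,3)] using heap_ld[of 1 xs "xs ! i" d] assms by auto
  also have "\<dots> \<longleftrightarrow> (2*n-1-i) div 2^d = 1"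
  proof
    assume "\<exists>v. n \<le> v \<and> v \<le> 2 * n - 1 \<and> v div 2^d = 1 \<and> xs ! i = xs ! (2 * n - 1 - v)"
    then obtain v where v: "n \<le> v" "v \<le> 2 * n - 1" "v div 2^d = 1" "xs ! i = xs ! (2 * n - 1 - v)" by blast
    have "i = 2*n-1-v" using nth_eq_iff_index_eq[OF assms(1), of i "2*n-1-v"] v assms by auto
    then have "v = 2*n-1-i" using v assms by arith
    then show "(2*n-1-i) div 2^d = 1" using v by simp
  next
    assume "(2*n-1-i) div 2^d = 1"
    moreover have "2 * n - 1 - (2 * n - 1 - i) = i" "n \<le> 2*n-1-i" using assms by arith+
    ultimately show "\<exists>v. n \<le> v \<and> v \<le> 2 * n - 1 \<and> v div 2^d = 1 \<and> xs ! i = xs ! (2 * n - 1 - v)"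
      by (intro exI[of _ "2*n-1-i"]) auto
  qed
  finally show ?thesis .
qed

theorem lemma2:
  fixes xs :: "'a list" and n :: nat
  assumes "distinct xs" and "length xs = n" and "n \<ge> 1"
  shows "(\<forall>i<n. \<exists>d. (xs ! i, d) \<in> leaf_depths (final_tree (map Leaf xs)))
       \<and> (\<forall>i<n. \<forall>d. (xs ! i, d) \<in> leaf_depths (final_tree (map Leaf xs)) \<longrightarrow>
              d = nat \<lceil>log 2 (real n)\<rceil> \<or> d + 1 = nat \<lceil>log 2 (real n)\<rceil>)
       \<and> (\<forall>i<n. \<forall>j<n. \<forall>d.
              (xs ! i, nat \<lceil>log 2 (real n)\<rceil>) \<in> leaf_depths (final_tree (map Leaf xs))
              \<and> (xs ! j, d) \<in> leaf_depths (final_tree (map Leaf xs))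
              \<and> d + 1 = nat \<lceil>log 2 (real n)\<rceil> \<longrightarrow> i < j)"
proof (intro conjI allI impI)
  define k where "k = nat \<lceil>log 2 (real n)\<rceil>"
  have K: "n \<le> 2^k" "k = 0 \<or> 2^(k-1) < n" using klog[OF assms(3)] unfolding k_def by auto
  note C = char[OF assms]
  {
    fix i assume i: "i < n"
    have "2*n-1-i \<ge> 1" using i by arith
    then obtain d where "2^d \<le> 2*n-1-i" "2*n-1-i < 2^(d+1)" using ex_power_ivl1[of 2 "2*n-1-i"] by auto
    then show "\<exists>d. (xs ! i, d) \<in> leaf_depths (final_tree (map Leaf xs))"
      using C[OF i] div_one_iff by (intro exI[of _ d]) auto
  }
  {
    fix i d assume i: "i < n" and "(xs ! i, d) \<in> leaf_depths (final_tree (map Leaf xs))"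
    then have v: "2^d \<le> 2*n-1-i" "2*n-1-i < 2*2^d" using C[OF i] div_one_iff by auto
    have "(2::nat)^d < 2^(k+1)" using v K i by simp
    then have dk: "d \<le> k" using power_strict_increasing_iff[of "2::nat" d "k+1"] by simp
    have "k \<le> d + 1"
    proof (cases "k = 0")
      case False
      then have "(2::nat)^(k-1) < 2^(d+1)" using v K i by simp
      then have "k - 1 < d + 1" using power_strict_increasing_iff[of "2::nat" "k-1" "d+1"] by simp
      then show ?thesis by arith
    qed simp
    show "d = nat \<lceil>log 2 (real n)\<rceil> \<or> d + 1 = nat \<lceil>log 2 (real n)\<rceil>"
      using dk \<open>k \<le> d + 1\<close> unfolding k_def[symmetric] by arith
  }
  {
    fix i j d assume i: "i < n" and j: "j < n" and
      h: "(xs ! i, nat \<lceil>log 2 (real n)\<rceil>) \<in> leaf_depths (final_tree (map Leaf xs))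
              \<and> (xs ! j, d) \<in> leaf_depths (final_tree (map Leaf xs))
              \<and> d + 1 = nat \<lceil>log 2 (real n)\<rceil>"
    have a: "2^k \<le> 2*n-1-i" using h C[OF i] div_one_iff unfolding k_def by auto
    have b: "2*n-1-j < 2*2^d" using h C[OF j] div_one_iff by auto
    have "2*(2::nat)^d = 2^k" using h unfolding k_def by (metis power_Suc Suc_eq_plus1)
    then have "2*n-1-j < 2*n-1-i" using a b by linarith
    then show "i < j" by arith
  }
qed

end
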